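(* Consider the GBDF5 coefficients $a_0=\tfrac{5\beta^4+40\beta^3+105\beta^2+100\beta+24}{120}$, $a_1=\tfrac{-10\beta^4-70\beta^3-135\beta^2-25\beta+77}{60}$, $a_2=\tfrac{15\beta^4+90\beta^3+120\beta^2-45\beta-43}{60}$, $a_3=\tfrac{-10\beta^4-50\beta^3-45\beta^2+25\beta+17}{60}$, $a_4=\tfrac{5\beta^4+20\beta^3+15\beta^2-10\beta-6}{120}$; $b_0=\tfrac{\beta(\beta^3+6\beta^2+11\beta+6)}{24}$, $b_1=\tfrac{-\beta^4-5\beta^3-5\beta^2+5\beta+6}{6}$, $b_2=\tfrac{\beta(\beta^3+4\beta^2+\beta-6)}{4}$, $b_3=\tfrac{\beta(-\beta^3-3\beta^2+\beta+3)}{6}$, $b_4=\tfrac{\beta(\beta^3+2\beta^2-\beta-2)}{24}$, $b_5=0$; $c_0=\tfrac{\beta^4+10\beta^3+35\beta^2+50\beta+24}{24}$, $c_1=-\tfrac{\beta(\beta^3+9\beta^2+26\beta+24)}{6}$, $c_2=\tfrac{\beta(\beta^3+8\beta^2+19\beta+12)}{4}$, $c_3=-\tfrac{\beta(\beta^3+7\beta^2+14\beta+8)}{6}$, $c_4=\tfrac{\beta(\beta^3+6\beta^2+11\beta+6)}{24}$. For $\beta\ge1$, $$\sigma_{\mathrm{F}}\ge1,\quad\sigma_{\mathrm{E}}\ge\frac{5(2\beta^4+16\beta^3+40\beta^2+32\beta+3)}{10\beta^4+60\beta^3+90\beta^2-32},\quad\lambda_{\mathrm{I}}\le\frac{5(2\beta^4+8\beta^3+4\beta^2-8\beta-3)}{10\beta^4+60\beta^3+90\beta^2-32},$$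 so that $\mathfrak{I}_{\mathrm{IE}}\le\dfrac{2\beta^4+8\beta^3+4\beta^2-8\beta-3}{2\beta^4+16\beta^3+40\beta^2+32\beta+3}$. If $\beta=20$, then $\sigma_{\mathrm{F}}\le\frac{399}{200}$, $\sigma_{\mathrm{E}}\le\frac{2501825}{2115968}$, $\lambda_{\mathrm{I}}\ge\frac{1769085}{2115968}$, so that $\mathfrak{I}_{\mathrm{IE}}\ge\frac{353817}{500365}$.
   Context: For coefficient vectors $(a_j)_{j=0}^{\mathrm{k}-1}$, $(b_j)_{j=0}^{\mathrm{k}}$, $(c_j)_{j=0}^{\mathrm{k}-1}$ define $a(\theta)=\sum_j a_je^{\imath j\theta}$, $b(\theta)=\sum_j b_je^{\imath j\theta}$, $c(\theta)=\sum_jc_je^{\imath j\theta}$ and $\sigma_{\mathrm{F}}=\max_{\theta\in[0,2\pi)}|1/a(\theta)|$, $\sigma_{\mathrm{E}}=\max_{\theta\in[0,2\pi)}|c(\theta)/a(\theta)|$, $\lambda_{\mathrm{I}}=\min_{\theta\in[0,2\pi)}\Re[b(\theta)/a(\theta)]$, $\mathfrak{I}_{\mathrm{IE}}=\lambda_{\mathrm{I}}/\sigma_{\mathrm{E}}$. Here $\mathrm{k}=5$. *)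

theory Defs
  imports "HOL-Analysis.Analysis"
begin

definition gbdf5_a :: "real \<Rightarrow> nat \<Rightarrow> real" where
  "gbdf5_a \<beta> j =
    (if j = 0 then (5*\<beta>^4 + 40*\<beta>^3 + 105*\<beta>^2 + 100*\<beta> + 24) / 120
     else if j = 1 then (-10*\<beta>^4 - 70*\<beta>^3 - 135*\<beta>^2 - 25*\<beta> + 77) / 60
     else if j = 2 then (15*\<beta>^4 + 90*\<beta>^3 + 120*\<beta>^2 - 45*\<beta> - 43) / 60
     else if j = 3 then (-10*\<beta>^4 - 50*\<beta>^3 - 45*\<beta>^2 + 25*\<beta> + 17) / 60
     else if j = 4 then (5*\<beta>^4 + 20*\<beta>^3 + 15*\<beta>^2 - 10*\<beta> - 6) / 120
     else 0)"

definition gbdf5_b :: "real \<Rightarrow> nat \<Rightarrow> real" where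
  "gbdf5_b \<beta> j =
    (if j = 0 then \<beta> * (\<beta>^3 + 6*\<beta>^2 + 11*\<beta> + 6) / 24
     else if j = 1 then (- (\<beta>^4) - 5*\<beta>^3 - 5*\<beta>^2 + 5*\<beta> + 6) / 6
     else if j = 2 then \<beta> * (\<beta>^3 + 4*\<beta>^2 + \<beta> - 6) / 4
     else if j = 3 then \<beta> * (- (\<beta>^3) - 3*\<beta>^2 + \<beta> + 3) / 6
     else if j = 4 then \<beta> * (\<beta>^3 + 2*\<beta>^2 - \<beta> - 2) / 24
     else 0)"

definition gbdf5_c :: "real \<Rightarrow> nat \<Rightarrow> real" where
  "gbdf5_c \<beta> j =
    (if j = 0 then (\<beta>^4 + 10*\<beta>^3 + 35*\<beta>^2 + 50*\<beta> + 24) / 24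
     else if j = 1 then - (\<beta> * (\<beta>^3 + 9*\<beta>^2 + 26*\<beta> + 24) / 6)
     else if j = 2 then \<beta> * (\<beta>^3 + 8*\<beta>^2 + 19*\<beta> + 12) / 4
     else if j = 3 then - (\<beta> * (\<beta>^3 + 7*\<beta>^2 + 14*\<beta> + 8) / 6)
     else if j = 4 then \<beta> * (\<beta>^3 + 6*\<beta>^2 + 11*\<beta> + 6) / 24
     else 0)"

definition trig_poly :: "(nat \<Rightarrow> real) \<Rightarrow> nat \<Rightarrow> real \<Rightarrow> complex" where
  "trig_poly coef n \<theta> = (\<Sum>j\<le>n. complex_of_real (coef j) * exp (\<i> * complex_of_real (real j * \<theta>)))"

definition kk :: nat where "kk = 5"

definition a_fun :: "real \<Rightarrow> real \<Rightarrow> complex" where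
  "a_fun \<beta> \<theta> = trig_poly (gbdf5_a \<beta>) (kk - 1) \<theta>"
definition b_fun :: "real \<Rightarrow> real \<Rightarrow> complex" where
  "b_fun \<beta> \<theta> = trig_poly (gbdf5_b \<beta>) kk \<theta>"
definition c_fun :: "real \<Rightarrow> real \<Rightarrow> complex" where
  "c_fun \<beta> \<theta> = trig_poly (gbdf5_c \<beta>) (kk - 1) \<theta>"

definition sigma_F :: "real \<Rightarrow> real" where
  "sigma_F \<beta> = (SUP \<theta>\<in>{0..<2*pi}. cmod (1 / a_fun \<beta> \<theta>))"
definition sigma_E :: "real \<Rightarrow> real" where
  "sigma_E \<beta> = (SUP \<theta>\<in>{0..<2*pi}. cmod (c_fun \<beta> \<theta> / a_fun \<beta> \<theta>))"
definition lambda_I :: "real \<Rightarrow> real" where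
  "lambda_I \<beta> = (INF \<theta>\<in>{0..<2*pi}. Re (b_fun \<beta> \<theta> / a_fun \<beta> \<theta>))"
definition I_IE :: "real \<Rightarrow> real" where
  "I_IE \<beta> = lambda_I \<beta> / sigma_E \<beta>"

end

theory Submission
  imports Defs
begin



definition RP :: "(nat \<Rightarrow> real) \<Rightarrow> real \<Rightarrow> real" where
  "RP f c = f 0 + f 1 * c + f 2 * (2*c^2-1) + f 3 * (4*c^3-3*c) + f 4 * (8*c^4-8*c^2+1)"
definition IP :: "(nat \<Rightarrow> real) \<Rightarrow> real \<Rightarrow> real" where
  "IP f c = f 1 + f 2 * (2*c) + f 3 * (4*c^2-1) + f 4 * (8*c^3-4*c)"

lemma cos2: "cos (2*x) = 2*cos x^2 - (1::real)" by (simp add: cos_double_cos)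
lemma sin2: "sin (2*(x::real)) = sin x * (2*cos x)" by (simp add: sin_double)
lemma cos3: "cos (3*(x::real)) = 4*cos x^3 - 3*cos x"
proof -
  have "cos (3*x) = cos (2*x + x)" by simp
  also have "\<dots> = 4*cos x^3 - 3*cos x" unfolding cos_add sin_double cos_double_cos
    using sin_cos_squared_add[of x] by algebra
  finally show ?thesis .
qed
lemma sin3: "sin (3*(x::real)) = sin x * (4*cos x^2 - 1)"
proof -
  have "sin (3*x) = sin (2*x + x)" by simp
  also have "\<dots> = sin x * (4*cos x^2 - 1)" unfolding sin_add sin_double cos_double_cos
    by (simp add: power2_eq_square algebra_simps)
  finally show ?thesis .
qed
lemma cos4: "cos (4*(x::real)) = 8*cos x^4 - 8*cos x^2 + 1"
proof -
  have "cos (4*x) = cos (2*(2*x))" by simp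
  also have "\<dots> = 8*cos x^4 - 8*cos x^2 + 1" unfolding cos_double_cos
    by (simp add: power2_eq_square algebra_simps power4_eq_xxxx)
  finally show ?thesis .
qed
lemma sin4: "sin (4*(x::real)) = sin x * (8*cos x^3 - 4*cos x)"
proof -
  have "sin (4*x) = sin (2*(2*x))" by simp
  also have "\<dots> = sin x * (8*cos x^3 - 4*cos x)" unfolding sin_double[of "2*x"] cos_double_cos sin_double
    by (simp add: power2_eq_square power3_eq_cube algebra_simps)
  finally show ?thesis .
qed

lemma sum4: "(\<Sum>j\<le>(4::nat). g j) = g 0 + g 1 + g 2 + g 3 + (g 4::complex)"
  by (simp add: eval_nat_numeral atMost_Suc)

lemma Re_tp: "Re (trig_poly f 4 \<theta>) = RP f (cos \<theta>)"
  unfolding trig_poly_def sum4 RP_def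
  by (simp add: Re_exp cos2 cos3 cos4)

lemma Im_tp: "Im (trig_poly f 4 \<theta>) = sin \<theta> * IP f (cos \<theta>)"
  unfolding trig_poly_def sum4 IP_def
  by (simp add: Im_exp sin2 sin3 sin4) (simp add: algebra_simps)

lemma tp5: "f 5 = 0 \<Longrightarrow> trig_poly f 5 \<theta> = trig_poly f 4 \<theta>"
  unfolding trig_poly_def by (simp add: eval_nat_numeral atMost_Suc)



definition NN :: "real \<Rightarrow> real" where "NN t = (228/5) + t*(224 + t*((15016/45) + t*((680/3) + t*((704/9) + t*((40/3) + t*((8/9)))))))"
definition PP :: "real \<Rightarrow> real" where "PP t = (8768/75) + t*((6112/9) + t*((21304/15) + t*((13624/9) + t*((41812/45) + t*((3080/9) + t*((224/3) + t*((80/9) + t*((4/9)))))))))"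

lemma absq_gen: "(RP (gbdf5_a (1+t)) (1-2*u))^2 + (1-(1-2*u)^2) * (IP (gbdf5_a (1+t)) (1-2*u))^2
   = 1 + u/3 + 8/45*u^2 - NN t * u^3 + PP t * u^4"
  unfolding RP_def IP_def gbdf5_a_def NN_def PP_def
  by (simp add: field_simps) algebra

lemma RR_id: "1024/5 * PP t ^ 3 - 27 * NN t ^ 4 = (443991923763968/2109375) + t*((287610147315712/84375) + t*((31302896891201536/1265625) + t*((244629817279879168/2278125) + t*((132869193177147392/421875) + t*((101525020286179328/151875) + t*((815244846385995776/759375) + t*((1513766356529152/1125) + t*((204393481643339776/151875) + t*((19898209488293888/18225) + t*((36811383064082432/50625) + t*((2436187887751168/6075) + t*((16789214863222784/91125) + t*((429981091274752/6075) + t*((691653009473536/30375) + t*((22348570345472/3645) + t*((8370072444928/6075) + t*((3853656064/15) + t*((239223832576/6075) + t*((1188069376/243) + t*((2920050688/6075) + t*((26312704/729) + t*((2367488/1215) + t*((16384/243) + t*((4096/3645)))))))))))))))))))))))))"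
  unfolding NN_def PP_def by algebra

lemma RR_nonneg: "t \<ge> 0 \<Longrightarrow> 27 * NN t ^ 4 \<le> 1024/5 * PP t ^ 3"
proof -
  assume t: "t \<ge> 0"
  have "0 \<le> ((443991923763968/2109375) + t*((287610147315712/84375) + t*((31302896891201536/1265625) + t*((244629817279879168/2278125) + t*((132869193177147392/421875) + t*((101525020286179328/151875) + t*((815244846385995776/759375) + t*((1513766356529152/1125) + t*((204393481643339776/151875) + t*((19898209488293888/18225) + t*((36811383064082432/50625) + t*((2436187887751168/6075) + t*((16789214863222784/91125) + t*((429981091274752/6075) + t*((691653009473536/30375) + t*((22348570345472/3645) + t*((8370072444928/6075) + t*((3853656064/15) + t*((239223832576/6075) + t*((1188069376/243) + t*((2920050688/6075) + t*((26312704/729) + t*((2367488/1215) + t*((16384/243) + t*((4096/3645))))))))))))))))))))))))))" using t by (intro add_nonneg_nonneg mult_nonneg_nonneg; simp)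
  then show ?thesis using RR_id[of t] by linarith
qed


lemma p1_id: "(RP (gbdf5_a 20) c)^2 + (1-c^2)*(IP (gbdf5_a 20) c)^2 - (200/399)^2 = (7806995799/625000000)*(10000*c^2 + (-155801218001875/7806995799)*c + (2654531550674069954891/266613590733329400))^2 + (1173580540594816412594043217/999800965249985250000000000)*(100*c + (-233188858420181795942791589525/2347161081189632825188086434))^2 + (292733023458729298976450047613033147905139242796633/94312268665435071340919648894630904170456250000000000)"
  unfolding RP_def IP_def by (simp add: gbdf5_a_def gbdf5_b_def gbdf5_c_def) algebra

lemma p1_pos: "(RP (gbdf5_a 20) c)^2 + (1-c^2)*(IP (gbdf5_a 20) c)^2 - (200/399)^2 > 0"
  unfolding p1_id by (intro add_nonneg_pos add_nonneg_nonneg mult_nonneg_nonneg) auto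

lemma p2_id: "(2501825/2115968)^2 * ((RP (gbdf5_a 20) c)^2 + (1-c^2)*(IP (gbdf5_a 20) c)^2) - ((RP (gbdf5_c 20) c)^2 + (1-c^2)*(IP (gbdf5_c 20) c)^2) = (53891464790608506339/22386602885120000000)*(10000*c^2 + (-46731534438029134855625/2343107164809065493)*c + (255681005817251702073558685264247/25712022037585247938134442500))^2 + (4858996363754012378700430432399465798376831527/13057198337895083536554806239870156800000000000)*(100*c + (-11082287655133758393979200519201801832404341679275/111756916366342284710109899945187713362667125121))^2 + (37940581953331642418758241047167422252235305343141286432609900848165340953482087507/4911952930118934110394186296642019700672245451329149447262851777757504000000000000000)"
  unfolding RP_def IP_def by (simp add: gbdf5_a_def gbdf5_b_def gbdf5_c_def) algebra

lemma p2_pos: "(2501825/2115968)^2 * ((RP (gbdf5_a 20) c)^2 + (1-c^2)*(IP (gbdf5_a 20) c)^2) - ((RP (gbdf5_c 20) c)^2 + (1-c^2)*(IP (gbdf5_c 20) c)^2) > 0"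
  unfolding p2_id by (intro add_nonneg_pos add_nonneg_nonneg mult_nonneg_nonneg) auto

lemma p3_id: "RP (gbdf5_b 20) c * RP (gbdf5_a 20) c + (1-c^2)*(IP (gbdf5_b 20) c * IP (gbdf5_a 20) c) - 1769085/2115968 * ((RP (gbdf5_a 20) c)^2 + (1-c^2)*(IP (gbdf5_a 20) c)^2) = (741531983094211/793488000000000)*(10000*c^2 + (-14788907159849059375/741531983094211)*c + (1448988658553026988743134621/145722454270552112349400))^2 + (34783612727199937479608950347906618251/231258037588463709047801414400000000000)*(100*c + (-6897915178829695130855646139880766115125/69567225454399874959217900695813236502))^2 + (837769939089966816496307955535032720167774230087474310634095040061/266469948755228930516296021182082737840132520825835543520000000000000)"
  unfolding RP_def IP_def by (simp add: gbdf5_a_def gbdf5_b_def gbdf5_c_def) algebra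

lemma p3_pos: "RP (gbdf5_b 20) c * RP (gbdf5_a 20) c + (1-c^2)*(IP (gbdf5_b 20) c * IP (gbdf5_a 20) c) - 1769085/2115968 * ((RP (gbdf5_a 20) c)^2 + (1-c^2)*(IP (gbdf5_a 20) c)^2) > 0"
  unfolding p3_id by (intro add_nonneg_pos add_nonneg_nonneg mult_nonneg_nonneg) auto



lemma a_fun_eq: "a_fun \<beta> \<theta> = trig_poly (gbdf5_a \<beta>) 4 \<theta>"
  by (simp add: a_fun_def kk_def)
lemma c_fun_eq: "c_fun \<beta> \<theta> = trig_poly (gbdf5_c \<beta>) 4 \<theta>"
  by (simp add: c_fun_def kk_def)
lemma b_fun_eq: "b_fun \<beta> \<theta> = trig_poly (gbdf5_b \<beta>) 4 \<theta>"
  unfolding b_fun_def kk_def by (rule tp5) (simp add: gbdf5_b_def)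

lemma tp_sq: "(cmod (trig_poly f 4 \<theta>))^2 = (RP f (cos \<theta>))^2 + (1 - cos \<theta>^2) * (IP f (cos \<theta>))^2"
proof -
  have "sin \<theta>^2 = 1 - cos \<theta>^2" by (simp add: sin_squared_eq)
  then show ?thesis unfolding cmod_power2 Re_tp Im_tp by (simp add: power_mult_distrib)
qed

lemma tp_Re_div: "Re (trig_poly g 4 \<theta> / trig_poly f 4 \<theta>) =
   (RP g (cos \<theta>) * RP f (cos \<theta>) + (1 - cos \<theta>^2) * (IP g (cos \<theta>) * IP f (cos \<theta>))) / (cmod (trig_poly f 4 \<theta>))^2"
proof -
  have "sin \<theta>^2 = 1 - cos \<theta>^2" by (simp add: sin_squared_eq)
  have e: "sin \<theta> * a * (sin \<theta> * b) = (1 - cos \<theta>^2) * (b * a)" for a b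
  proof -
    have "sin \<theta> * a * (sin \<theta> * b) = sin \<theta>^2 * (b * a)" by (simp add: power2_eq_square mult_ac)
    then show ?thesis using \<open>sin \<theta>^2 = 1 - cos \<theta>^2\<close> by simp
  qed
  show ?thesis unfolding Re_divide' Re_tp Im_tp e by (simp add: mult_ac)
qed

lemma tp_norm_le: "cmod (trig_poly f n \<theta>) \<le> (\<Sum>j\<le>n. \<bar>f j\<bar>)"
  unfolding trig_poly_def
  by (rule order.trans[OF norm_sum]) (simp add: norm_mult)

lemma amgm: fixes r y :: real assumes y: "y \<ge> 0" and h: "27 * r^4 \<le> 1024/5 * y^3"
  shows "r \<le> 4/5 + y"
proof (rule ccontr)
  assume "\<not> r \<le> 4/5 + y"
  then have "4/5 + y < r" by simp
  then have "(4/5 + y)^4 < r^4" using y by (intro power_strict_mono) auto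
  moreover have "(4/5+y)^4 - 1024/135 * y^3 = (y - 12/5)^2 * (y^2 + 56/135*y + 16/225)"
    by algebra
  moreover have "(y - 12/5)^2 * (y^2 + 56/135*y + 16/225) \<ge> 0" using y by simp
  ultimately show False using h by linarith
qed

lemma NN_nonneg: "t \<ge> 0 \<Longrightarrow> NN t \<ge> 0" unfolding NN_def
  by (intro add_nonneg_nonneg mult_nonneg_nonneg; simp)
lemma PP_nonneg: "t \<ge> 0 \<Longrightarrow> PP t \<ge> 0" unfolding PP_def
  by (intro add_nonneg_nonneg mult_nonneg_nonneg; simp)

lemma a_lower: assumes "\<beta> \<ge> 1" shows "(cmod (a_fun \<beta> \<theta>))^2 \<ge> 1/5"
proof -
  define t where "t = \<beta> - 1"
  define u where "u = (1 - cos \<theta>)/2"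
  have t: "t \<ge> 0" using assms t_def by simp
  have b: "\<beta> = 1 + t" using t_def by simp
  have c: "cos \<theta> = 1 - 2*u" using u_def by simp
  have c1: "cos \<theta> \<le> 1" "cos \<theta> \<ge> -1" by simp_all
  have u0: "u \<ge> 0" "u \<le> 1" using c1 by (simp_all add: u_def)
  have eq: "(cmod (a_fun \<beta> \<theta>))^2 = 1 + u/3 + 8/45*u^2 - NN t * u^3 + PP t * u^4"
    unfolding a_fun_eq tp_sq b c absq_gen ..
  have "27 * (NN t * u^3)^4 = (27 * NN t^4) * u^12" by (simp add: power_mult_distrib flip: power_mult)
  also have "\<dots> \<le> (1024/5 * PP t^3) * u^12"
    using RR_nonneg[OF t] by (intro mult_right_mono) auto
  also have "\<dots> = 1024/5 * (PP t * u^4)^3" by (simp add: power_mult_distrib flip: power_mult)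
  finally have "NN t * u^3 \<le> 4/5 + PP t * u^4"
    using PP_nonneg[OF t] u0 by (intro amgm) auto
  moreover have "u^2 \<ge> 0" by simp
  ultimately show ?thesis unfolding eq using u0 by linarith
qed

lemma a_norm_lower: assumes "\<beta> \<ge> 1" shows "cmod (a_fun \<beta> \<theta>) \<ge> 2/5"
proof (rule ccontr)
  assume "\<not> ?thesis" then have "cmod (a_fun \<beta> \<theta>) < 2/5" by simp
  then have "(cmod (a_fun \<beta> \<theta>))^2 < (2/5)^2" by (intro power_strict_mono) auto
  then show False using a_lower[OF assms, of \<theta>] unfolding power2_eq_square by linarith
qed



lemma cmod_from_sq: "(cmod z)^2 = r^2 \<Longrightarrow> cmod z = \<bar>r\<bar>"
  by (metis abs_norm_cancel real_sqrt_abs)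

lemma RPa1: "RP (gbdf5_a \<beta>) 1 = 1"
  unfolding RP_def gbdf5_a_def by (simp add: field_simps)
lemma RPam1: "RP (gbdf5_a \<beta>) (-1) = (10*\<beta>^4 + 60*\<beta>^3 + 90*\<beta>^2 - 32) / 15"
  unfolding RP_def gbdf5_a_def by (simp add: field_simps)
lemma RPbm1: "RP (gbdf5_b \<beta>) (-1) = (2*\<beta>^4 + 8*\<beta>^3 + 4*\<beta>^2 - 8*\<beta> - 3) / 3"
  unfolding RP_def gbdf5_b_def by (simp add: field_simps) algebra
lemma RPcm1: "RP (gbdf5_c \<beta>) (-1) = (2*\<beta>^4 + 16*\<beta>^3 + 40*\<beta>^2 + 32*\<beta> + 3) / 3"
  unfolding RP_def gbdf5_c_def by (simp add: field_simps) algebra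

lemma a_at0: "cmod (a_fun \<beta> 0) = 1"
  by (rule cmod_from_sq[where r=1, simplified]) (simp add: a_fun_eq tp_sq RPa1)

lemma polys_pos: assumes "\<beta> \<ge> (1::real)"
  shows "10*\<beta>^4 + 60*\<beta>^3 + 90*\<beta>^2 - 32 > 0"
    and "2*\<beta>^4 + 16*\<beta>^3 + 40*\<beta>^2 + 32*\<beta> + 3 > 0"
    and "2*\<beta>^4 + 8*\<beta>^3 + 4*\<beta>^2 - 8*\<beta> - 3 > 0"
proof -
  have h2: "\<beta>^2 \<ge> 1" using assms by (simp add: one_le_power)
  have h3: "\<beta>^3 \<ge> \<beta>" using assms h2 by (simp add: power3_eq_cube power2_eq_square mult_le_cancel_left1)
  have h4: "\<beta>^4 \<ge> 1" using assms by (simp add: one_le_power)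
  show "10*\<beta>^4 + 60*\<beta>^3 + 90*\<beta>^2 - 32 > 0" using assms h2 h3 h4 by linarith
  show "2*\<beta>^4 + 16*\<beta>^3 + 40*\<beta>^2 + 32*\<beta> + 3 > 0" using assms h2 h3 h4 by linarith
  show "2*\<beta>^4 + 8*\<beta>^3 + 4*\<beta>^2 - 8*\<beta> - 3 > 0" using assms h2 h3 h4 by linarith
qed

lemma a_atpi: "cmod (a_fun \<beta> pi) = \<bar>(10*\<beta>^4 + 60*\<beta>^3 + 90*\<beta>^2 - 32) / 15\<bar>"
  by (rule cmod_from_sq) (simp add: a_fun_eq tp_sq RPam1)
lemma c_atpi: "cmod (c_fun \<beta> pi) = \<bar>(2*\<beta>^4 + 16*\<beta>^3 + 40*\<beta>^2 + 32*\<beta> + 3) / 3\<bar>"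
  by (rule cmod_from_sq) (simp add: c_fun_eq tp_sq RPcm1)
lemma ba_atpi: "Re (b_fun \<beta> pi / a_fun \<beta> pi) = 
   ((2*\<beta>^4 + 8*\<beta>^3 + 4*\<beta>^2 - 8*\<beta> - 3) / 3) * ((10*\<beta>^4 + 60*\<beta>^3 + 90*\<beta>^2 - 32) / 15)
   / (cmod (a_fun \<beta> pi))^2"
  unfolding a_fun_eq b_fun_eq tp_Re_div by (simp add: RPam1 RPbm1)

lemma pt_bounds: assumes b: "\<beta> \<ge> 1"
  shows "cmod (1 / a_fun \<beta> \<theta>) \<le> 5/2"
    and "cmod (c_fun \<beta> \<theta> / a_fun \<beta> \<theta>) \<le> (\<Sum>j\<le>4. \<bar>gbdf5_c \<beta> j\<bar>) / (2/5)"
    and "- ((\<Sum>j\<le>4. \<bar>gbdf5_b \<beta> j\<bar>) / (2/5)) \<le> Re (b_fun \<beta> \<theta> / a_fun \<beta> \<theta>)"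
proof -
  have a: "cmod (a_fun \<beta> \<theta>) \<ge> 2/5" by (rule a_norm_lower[OF b])
  show "cmod (1 / a_fun \<beta> \<theta>) \<le> 5/2" unfolding norm_divide using a
    by (simp add: divide_le_eq) 
  show "cmod (c_fun \<beta> \<theta> / a_fun \<beta> \<theta>) \<le> (\<Sum>j\<le>4. \<bar>gbdf5_c \<beta> j\<bar>) / (2/5)"
    unfolding norm_divide using a tp_norm_le[of "gbdf5_c \<beta>" 4 \<theta>]
    by (intro frac_le) (auto simp: c_fun_eq)
  have "cmod (b_fun \<beta> \<theta> / a_fun \<beta> \<theta>) \<le> (\<Sum>j\<le>4. \<bar>gbdf5_b \<beta> j\<bar>) / (2/5)"
    unfolding norm_divide using a tp_norm_le[of "gbdf5_b \<beta>" 4 \<theta>]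
    by (intro frac_le) (auto simp: b_fun_eq)
  moreover have "- cmod (b_fun \<beta> \<theta> / a_fun \<beta> \<theta>) \<le> Re (b_fun \<beta> \<theta> / a_fun \<beta> \<theta>)"
    using abs_Re_le_cmod[of "b_fun \<beta> \<theta> / a_fun \<beta> \<theta>"] by linarith
  ultimately show "- ((\<Sum>j\<le>4. \<bar>gbdf5_b \<beta> j\<bar>) / (2/5)) \<le> Re (b_fun \<beta> \<theta> / a_fun \<beta> \<theta>)" by linarith
qed

lemma mem0: "0 \<in> {0..<2*pi}" and mempi: "pi \<in> {0..<2*pi}" by auto

lemma general: assumes b: "\<beta> \<ge> 1"
  shows "sigma_F \<beta> \<ge> 1
         \<and> sigma_E \<beta> \<ge> 5 * (2*\<beta>^4 + 16*\<beta>^3 + 40*\<beta>^2 + 32*\<beta> + 3)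
                        / (10*\<beta>^4 + 60*\<beta>^3 + 90*\<beta>^2 - 32)
         \<and> lambda_I \<beta> \<le> 5 * (2*\<beta>^4 + 8*\<beta>^3 + 4*\<beta>^2 - 8*\<beta> - 3)
                        / (10*\<beta>^4 + 60*\<beta>^3 + 90*\<beta>^2 - 32)
         \<and> I_IE \<beta> \<le> (2*\<beta>^4 + 8*\<beta>^3 + 4*\<beta>^2 - 8*\<beta> - 3)
                        / (2*\<beta>^4 + 16*\<beta>^3 + 40*\<beta>^2 + 32*\<beta> + 3)"
proof -
  define D where "D = 10*\<beta>^4 + 60*\<beta>^3 + 90*\<beta>^2 - 32"
  define Y where "Y = 2*\<beta>^4 + 16*\<beta>^3 + 40*\<beta>^2 + 32*\<beta> + 3"
  define X where "X = 2*\<beta>^4 + 8*\<beta>^3 + 4*\<beta>^2 - 8*\<beta> - 3"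
  have D: "D > 0" and Y: "Y > 0" and X: "X > 0" using polys_pos[OF b] by (auto simp: D_def Y_def X_def)
  have bF: "bdd_above ((\<lambda>\<theta>. cmod (1 / a_fun \<beta> \<theta>)) ` {0..<2*pi})"
    by (rule bdd_aboveI2) (rule pt_bounds(1)[OF b])
  have bE: "bdd_above ((\<lambda>\<theta>. cmod (c_fun \<beta> \<theta> / a_fun \<beta> \<theta>)) ` {0..<2*pi})"
    by (rule bdd_aboveI2) (rule pt_bounds(2)[OF b])
  have bI: "bdd_below ((\<lambda>\<theta>. Re (b_fun \<beta> \<theta> / a_fun \<beta> \<theta>)) ` {0..<2*pi})"
    by (rule bdd_belowI2) (rule pt_bounds(3)[OF b])
  have F: "sigma_F \<beta> \<ge> 1"
    unfolding sigma_F_def by (rule cSUP_upper2[OF bF mem0]) (simp add: norm_divide a_at0)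
  have ap: "cmod (a_fun \<beta> pi) = D / 15" using a_atpi[of \<beta>] D unfolding D_def by simp
  have cp: "cmod (c_fun \<beta> pi) = Y / 3" using c_atpi[of \<beta>] Y unfolding Y_def by simp
  have "cmod (c_fun \<beta> pi / a_fun \<beta> pi) = 5 * Y / D"
    unfolding norm_divide ap cp using D Y by (simp add: field_simps)
  then have E: "sigma_E \<beta> \<ge> 5 * Y / D"
    unfolding sigma_E_def by (intro cSUP_upper2[OF bE mempi]) simp
  have "Re (b_fun \<beta> pi / a_fun \<beta> pi) = 5 * X / D"
  proof -
    have "Re (b_fun \<beta> pi / a_fun \<beta> pi) = (X/3) * (D/15) / (D/15)^2"
      using ba_atpi[of \<beta>] unfolding ap unfolding X_def D_def .
    then show ?thesis using D by (simp add: field_simps power2_eq_square)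
  qed
  then have L: "lambda_I \<beta> \<le> 5 * X / D"
    unfolding lambda_I_def by (intro cINF_lower2[OF bI mempi]) simp
  have Epos: "sigma_E \<beta> > 0" using E D Y by (smt (verit) divide_pos_pos)
  have "I_IE \<beta> \<le> (5 * X / D) / sigma_E \<beta>"
    unfolding I_IE_def using L Epos by (intro divide_right_mono) auto
  also have "\<dots> \<le> (5 * X / D) / (5 * Y / D)"
    using E Epos X Y D by (intro divide_left_mono) auto
  also have "\<dots> = X / Y" using D by (simp add: field_simps)
  finally have I: "I_IE \<beta> \<le> X / Y" .
  show ?thesis using F E L I unfolding D_def X_def Y_def by simp
qed



lemma pt20: fixes \<theta> :: real
  shows "cmod (1 / a_fun 20 \<theta>) \<le> 399/200"
    and "cmod (c_fun 20 \<theta> / a_fun 20 \<theta>) \<le> 2501825 / 2115968"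
    and "Re (b_fun 20 \<theta> / a_fun 20 \<theta>) \<ge> 1769085 / 2115968"
proof -
  let ?A = "cmod (a_fun 20 \<theta>)" and ?C = "cmod (c_fun 20 \<theta>)"
  have A2: "?A^2 = (RP (gbdf5_a 20) (cos \<theta>))^2 + (1 - cos \<theta>^2) * (IP (gbdf5_a 20) (cos \<theta>))^2"
    unfolding a_fun_eq tp_sq ..
  have C2: "?C^2 = (RP (gbdf5_c 20) (cos \<theta>))^2 + (1 - cos \<theta>^2) * (IP (gbdf5_c 20) (cos \<theta>))^2"
    unfolding c_fun_eq tp_sq ..
  have Apos: "?A \<ge> 2/5" by (rule a_norm_lower) simp
  have "(200/399)^2 < ?A^2" using p1_pos[of "cos \<theta>"] unfolding A2 by linarith
  then have "200/399 < ?A" by (rule power_less_imp_less_base) simp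
  then show "cmod (1 / a_fun 20 \<theta>) \<le> 399/200" unfolding norm_divide
    by (simp add: divide_le_eq)
  have "?C^2 < (2501825 / 2115968 * ?A)^2" using p2_pos[of "cos \<theta>"] unfolding A2 C2 power_mult_distrib
    by linarith
  then have "?C < 2501825 / 2115968 * ?A" by (rule power_less_imp_less_base) (use Apos in simp)
  then show "cmod (c_fun 20 \<theta> / a_fun 20 \<theta>) \<le> 2501825 / 2115968" unfolding norm_divide
    using Apos by (simp add: divide_le_eq)
  have "Re (b_fun 20 \<theta> / a_fun 20 \<theta>) = (RP (gbdf5_b 20) (cos \<theta>) * RP (gbdf5_a 20) (cos \<theta>) + (1 - cos \<theta>^2) * (IP (gbdf5_b 20) (cos \<theta>) * IP (gbdf5_a 20) (cos \<theta>))) / ?A^2"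
    unfolding a_fun_eq b_fun_eq tp_Re_div ..
  moreover have "1769085 / 2115968 * ?A^2 < RP (gbdf5_b 20) (cos \<theta>) * RP (gbdf5_a 20) (cos \<theta>) + (1 - cos \<theta>^2) * (IP (gbdf5_b 20) (cos \<theta>) * IP (gbdf5_a 20) (cos \<theta>))"
    using p3_pos[of "cos \<theta>"] unfolding A2 by linarith
  moreover have "?A^2 > 0" using Apos by (intro zero_less_power) linarith
  ultimately show "Re (b_fun 20 \<theta> / a_fun 20 \<theta>) \<ge> 1769085 / 2115968"
    by (simp add: le_divide_eq)
qed

theorem mainTheorem9:
  shows "(\<forall>\<beta>::real. \<beta> \<ge> 1 \<longrightarrow>
           sigma_F \<beta> \<ge> 1
         \<and> sigma_E \<beta> \<ge> 5 * (2*\<beta>^4 + 16*\<beta>^3 + 40*\<beta>^2 + 32*\<beta> + 3)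
                        / (10*\<beta>^4 + 60*\<beta>^3 + 90*\<beta>^2 - 32)
         \<and> lambda_I \<beta> \<le> 5 * (2*\<beta>^4 + 8*\<beta>^3 + 4*\<beta>^2 - 8*\<beta> - 3)
                        / (10*\<beta>^4 + 60*\<beta>^3 + 90*\<beta>^2 - 32)
         \<and> I_IE \<beta> \<le> (2*\<beta>^4 + 8*\<beta>^3 + 4*\<beta>^2 - 8*\<beta> - 3)
                        / (2*\<beta>^4 + 16*\<beta>^3 + 40*\<beta>^2 + 32*\<beta> + 3))
       \<and> sigma_F 20 \<le> 399 / 200
       \<and> sigma_E 20 \<le> 2501825 / 2115968
       \<and> lambda_I 20 \<ge> 1769085 / 2115968
       \<and> I_IE 20 \<ge> 353817 / 500365"
proof -
  have ne: "{0..<2*pi} \<noteq> ({}::real set)" using mem0 by blast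
  have F: "sigma_F 20 \<le> 399 / 200" unfolding sigma_F_def
    by (rule cSUP_least[OF ne]) (rule pt20(1))
  have E: "sigma_E 20 \<le> 2501825 / 2115968" unfolding sigma_E_def
    by (rule cSUP_least[OF ne]) (rule pt20(2))
  have L: "lambda_I 20 \<ge> 1769085 / 2115968" unfolding lambda_I_def
    by (rule cINF_greatest[OF ne]) (rule pt20(3))
  
  have "sigma_E 20 > 0"
  proof -
    have "sigma_E 20 \<ge> 5 * (2*20^4 + 16*20^3 + 40*20^2 + 32*20 + 3) / (10*20^4 + 60*20^3 + 90*(20::real)^2 - 32)"
      using general[of 20] by simp
    then show ?thesis by simp
  qed
  then have "(1769085 / 2115968) / (2501825 / 2115968) \<le> lambda_I 20 / sigma_E 20"
    using E L by (intro frac_le) auto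
  then have I: "I_IE 20 \<ge> 353817 / 500365" unfolding I_IE_def by simp
  show ?thesis using general F E L I by blast
qed


end
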